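(* For every rooted tree $T_r$, the vertex set of $T_r$ contains two disjoint homometric sets, each of size at least $f(T_r)$.
   Context: For a tree $T_r$ rooted at $r$, let $h(T_r)$ be the number of vertices on a longest path in $T_r$ starting at $r$ (so a single vertex has $h=1$); the empty tree $T_\emptyset$ has $h(T_\emptyset)=0$ and $f(T_\emptyset)=0$. For a vertex $v$, $T_v$ denotes the subtree rooted at $v$ consisting of $v$ and its descendants. The function $f$ is defined recursively: if $|V(T_r)|\le 1$ then $f(T_r)=0$; otherwise let the children of $r$ be $v_1,\dots,v_k$ ordered so that $h(T_{v_1})\ge h(T_{v_2})\ge\dots\ge h(T_{v_k})$, where, if the number of children is odd, an extra empty tree $T_{v_k}=T_\emptyset$ is appended so that $k$ is even; then $$f(T_r)=\max\Big\{\sum_{i=1}^{k} f(T_{v_i}),\ \sum_{i=1}^{k/2} h(T_{v_{2i}})\Big\}.$$ The profile of a vertex set is the multiset of pairwise distances (in the tree) between its distinct vertices; two disjoint vertex sets are homometric if their profiles are equal, and the size of the pair is the common cardinality. *)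

theory Defs
  imports Main "HOL-Library.Multiset" "HOL-Library.List_Lexorder"
begin

text \<open>Finite rooted trees: a node with a (finite) list of children subtrees.
  Vertices are addressed by positions (paths of child indices from the root).\<close>

datatype rtree = Nd "rtree list"

text \<open>Number of vertices on a longest path starting at the root.\<close>
fun height :: "rtree \<Rightarrow> nat" where
  "height (Nd ts) = Suc (Max (insert 0 (set (map height ts))))"

inductive is_pos :: "rtree \<Rightarrow> nat list \<Rightarrow> bool" where
  root: "is_pos t []"
| child: "i < length ts \<Longrightarrow> is_pos (ts ! i) p \<Longrightarrow> is_pos (Nd ts) (i # p)"

definition verts :: "rtree \<Rightarrow> nat list set" where
  "verts t = {p. is_pos t p}"

text \<open>Longest common prefix of two positions (their lowest common ancestor).\<close>
fun lcp :: "nat list \<Rightarrow> nat list \<Rightarrow> nat list" where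
  "lcp (a # xs) (b # ys) = (if a = b then a # lcp xs ys else [])"
| "lcp _ _ = []"

text \<open>Tree distance: up from u to the lowest common ancestor, then down to v.\<close>
definition tdist :: "nat list \<Rightarrow> nat list \<Rightarrow> nat" where
  "tdist u v = length u + length v - 2 * length (lcp u v)"

text \<open>Profile: multiset of distances over all unordered pairs of distinct vertices
  (each unordered pair counted once, via a fixed linear order on positions).\<close>
definition profile :: "nat list set \<Rightarrow> nat multiset" where
  "profile S = image_mset (\<lambda>(u, v). tdist u v) (mset_set {(u, v). u \<in> S \<and> v \<in> S \<and> u < v})"

definition homometric :: "nat list set \<Rightarrow> nat list set \<Rightarrow> bool" where
  "homometric A B \<longleftrightarrow> A \<inter> B = {} \<and> profile A = profile B"

definition padded_heights :: "rtree list \<Rightarrow> nat list" where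
  "padded_heights ts = (let hs = rev (sort (map height ts))
                        in if odd (length hs) then hs @ [0] else hs)"

fun f :: "rtree \<Rightarrow> nat" where
  "f (Nd ts) = (if ts = [] then 0 else
     max (sum_list (map f ts))
         (\<Sum>i<length (padded_heights ts) div 2. padded_heights ts ! (2 * i + 1)))"

end

theory Submission imports Defs "HOL-Combinatorics.Permutations" begin

lemma lcp_len: "length (lcp p q) \<le> length p \<and> length (lcp p q) \<le> length q"
  by (induction p q rule: lcp.induct) auto

lemma lcp_sym: "lcp p q = lcp q p"
  by (induction p q rule: lcp.induct) auto

lemma lcp_same: "lcp p p = p"
  by (induction p) auto

lemma tdist_sym: "tdist u v = tdist v u"
  unfolding tdist_def by (simp add: lcp_sym add.commute)

lemma tdist_same: "tdist u u = 0"
  unfolding tdist_def by (simp add: lcp_same)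

lemma tdist_Cons: "tdist (a#p) (b#q) = (if a = b then tdist p q else length p + length q + 2)"
  using lcp_len[of p q] unfolding tdist_def by auto

lemma lcp_take: "lcp (take a w) (take b w) = take (min a b) w"
proof (induction w arbitrary: a b)
  case Nil then show ?case by simp
next
  case (Cons x w) then show ?case by (cases a; cases b) auto
qed

lemma tdist_take: "a \<le> length w \<Longrightarrow> b \<le> length w \<Longrightarrow>
   tdist (take a w) (take b w) = (if a \<le> b then b - a else a - b)"
  unfolding tdist_def lcp_take by auto

definition hinv :: "nat list set \<Rightarrow> nat list set \<Rightarrow> bool" where
  "hinv X Y \<longleftrightarrow> finite X \<and> finite Y \<and>
     (\<forall>g::nat\<Rightarrow>nat. (\<Sum>u\<in>X. \<Sum>v\<in>X. g (tdist u v)) = (\<Sum>u\<in>Y. \<Sum>v\<in>Y. g (tdist u v))) \<and>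
     (\<forall>g::nat\<Rightarrow>nat. (\<Sum>u\<in>X. g (length u)) = (\<Sum>u\<in>Y. g (length u)))"

lemma sum_UN_Cons:
  fixes n :: nat
  assumes "inj_on \<alpha> {..<n}" "\<forall>i<n. finite (X i)"
  shows "(\<Sum>u\<in>(\<Union>i<n. Cons (\<alpha> i) ` X i). \<phi> u) = (\<Sum>i<n. \<Sum>p\<in>X i. \<phi> (\<alpha> i # p))"
proof -
  have "(\<Sum>u\<in>(\<Union>i<n. Cons (\<alpha> i) ` X i). \<phi> u) = (\<Sum>i<n. \<Sum>u\<in>Cons (\<alpha> i) ` X i. \<phi> u)"
    apply (rule sum.UNION_disjoint)
    subgoal by simp
    subgoal using assms by simp
    subgoal using assms(1) by (auto simp: inj_on_def)
    done
  also have "\<dots> = (\<Sum>i<n. \<Sum>p\<in>X i. \<phi> (\<alpha> i # p))"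
    by (rule sum.cong) (auto simp: sum.reindex)
  finally show ?thesis .
qed

lemma card_UN_Cons:
  fixes n :: nat
  assumes "inj_on \<alpha> {..<n}" "\<forall>i<n. finite (X i)"
  shows "card (\<Union>i<n. Cons (\<alpha> i) ` X i) = (\<Sum>i<n. card (X i))"
  using sum_UN_Cons[OF assms, of "\<lambda>_. 1::nat"] by simp

lemma cross_eq:
  fixes g :: "nat \<Rightarrow> nat"
  assumes "hinv X X'" "hinv Y Y'"
  shows "(\<Sum>p\<in>X. \<Sum>q\<in>Y. g (length p + length q + 2)) = (\<Sum>p\<in>X'. \<Sum>q\<in>Y'. g (length p + length q + 2))"
proof -
  have dY: "\<And>h::nat\<Rightarrow>nat. (\<Sum>u\<in>Y. h (length u)) = (\<Sum>u\<in>Y'. h (length u))"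
    using assms(2) unfolding hinv_def by blast
  have dX: "\<And>h::nat\<Rightarrow>nat. (\<Sum>u\<in>X. h (length u)) = (\<Sum>u\<in>X'. h (length u))"
    using assms(1) unfolding hinv_def by blast
  have "(\<Sum>p\<in>X. \<Sum>q\<in>Y. g (length p + length q + 2)) = (\<Sum>p\<in>X. \<Sum>q\<in>Y'. g (length p + length q + 2))"
    apply (rule sum.cong[OF refl])
    subgoal for p by (rule dY[of "\<lambda>b. g (length p + b + 2)"])
    done
  also have "\<dots> = (\<Sum>p\<in>X'. \<Sum>q\<in>Y'. g (length p + length q + 2))"
    by (rule dX[of "\<lambda>a. \<Sum>q\<in>Y'. g (a + length q + 2)"])
  finally show ?thesis .
qed

lemma dist_expand:
  fixes n :: nat and g :: "nat \<Rightarrow> nat"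
  assumes inj: "inj_on \<alpha> {..<n}" and fin: "\<forall>i<n. finite (X i)"
  shows "(\<Sum>u\<in>(\<Union>i<n. Cons (\<alpha> i) ` X i). \<Sum>v\<in>(\<Union>i<n. Cons (\<alpha> i) ` X i). g (tdist u v))
    = (\<Sum>i<n. \<Sum>j<n. (if i = j then (\<Sum>p\<in>X i. \<Sum>q\<in>X i. g (tdist p q))
         else (\<Sum>p\<in>X i. \<Sum>q\<in>X j. g (length p + length q + 2))))"
proof -
  let ?A = "\<Union>i<n. Cons (\<alpha> i) ` X i"
  have "(\<Sum>u\<in>?A. \<Sum>v\<in>?A. g (tdist u v)) = (\<Sum>u\<in>?A. \<Sum>j<n. \<Sum>q\<in>X j. g (tdist u (\<alpha> j # q)))"
    by (rule sum.cong[OF refl], rule sum_UN_Cons[OF inj fin])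
  also have "\<dots> = (\<Sum>i<n. \<Sum>p\<in>X i. \<Sum>j<n. \<Sum>q\<in>X j. g (tdist (\<alpha> i # p) (\<alpha> j # q)))"
    by (rule sum_UN_Cons[OF inj fin])
  also have "\<dots> = (\<Sum>i<n. \<Sum>j<n. \<Sum>p\<in>X i. \<Sum>q\<in>X j. g (tdist (\<alpha> i # p) (\<alpha> j # q)))"
    by (rule sum.cong[OF refl], rule sum.swap)
  also have "\<dots> = (\<Sum>i<n. \<Sum>j<n. (if i = j then (\<Sum>p\<in>X i. \<Sum>q\<in>X i. g (tdist p q))
         else (\<Sum>p\<in>X i. \<Sum>q\<in>X j. g (length p + length q + 2))))"
  proof (rule sum.cong[OF refl], rule sum.cong[OF refl])
    fix i j assume ij: "i \<in> {..<n}" "j \<in> {..<n}"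
    have "\<alpha> i = \<alpha> j \<longleftrightarrow> i = j" using inj ij unfolding inj_on_def by blast
    then show "(\<Sum>p\<in>X i. \<Sum>q\<in>X j. g (tdist (\<alpha> i # p) (\<alpha> j # q))) =
       (if i = j then (\<Sum>p\<in>X i. \<Sum>q\<in>X i. g (tdist p q))
         else (\<Sum>p\<in>X i. \<Sum>q\<in>X j. g (length p + length q + 2)))"
      by (simp add: tdist_Cons)
  qed
  finally show ?thesis .
qed

lemma hinv_combine:
  fixes n :: nat
  assumes ia: "inj_on \<alpha> {..<n}" and ib: "inj_on \<beta> {..<n}" and h: "\<forall>i<n. hinv (X i) (Y i)"
  shows "hinv (\<Union>i<n. Cons (\<alpha> i) ` X i) (\<Union>i<n. Cons (\<beta> i) ` Y i)"
proof -
  have fX: "\<forall>i<n. finite (X i)" and fY: "\<forall>i<n. finite (Y i)" using h unfolding hinv_def by auto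
  have d: "(\<Sum>u\<in>(\<Union>i<n. Cons (\<alpha> i) ` X i). g (length u)) = (\<Sum>u\<in>(\<Union>i<n. Cons (\<beta> i) ` Y i). g (length u))"
    for g :: "nat \<Rightarrow> nat"
  proof -
    have "(\<Sum>u\<in>(\<Union>i<n. Cons (\<alpha> i) ` X i). g (length u)) = (\<Sum>i<n. \<Sum>p\<in>X i. g (Suc (length p)))"
      using sum_UN_Cons[OF ia fX, of "\<lambda>u. g (length u)"] by simp
    also have "\<dots> = (\<Sum>i<n. \<Sum>p\<in>Y i. g (Suc (length p)))"
      apply (rule sum.cong[OF refl])
      subgoal for i
      proof -
        assume "i \<in> {..<n}"
        then have "hinv (X i) (Y i)" using h by simp
        then show ?thesis unfolding hinv_def by (elim conjE allE) assumption
      qed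
      done
    also have "\<dots> = (\<Sum>u\<in>(\<Union>i<n. Cons (\<beta> i) ` Y i). g (length u))"
      using sum_UN_Cons[OF ib fY, of "\<lambda>u. g (length u)"] by simp
    finally show ?thesis .
  qed
  have dd: "(\<Sum>u\<in>(\<Union>i<n. Cons (\<alpha> i) ` X i). \<Sum>v\<in>(\<Union>i<n. Cons (\<alpha> i) ` X i). g (tdist u v))
     = (\<Sum>u\<in>(\<Union>i<n. Cons (\<beta> i) ` Y i). \<Sum>v\<in>(\<Union>i<n. Cons (\<beta> i) ` Y i). g (tdist u v))"
    for g :: "nat \<Rightarrow> nat"
    unfolding dist_expand[OF ia fX] dist_expand[OF ib fY]
  proof (rule sum.cong[OF refl], rule sum.cong[OF refl])
    fix i j assume ij: "i \<in> {..<n}" "j \<in> {..<n}"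
    then have hi: "hinv (X i) (Y i)" and hj: "hinv (X j) (Y j)" using h by auto
    show "(if i = j then (\<Sum>p\<in>X i. \<Sum>q\<in>X i. g (tdist p q))
         else (\<Sum>p\<in>X i. \<Sum>q\<in>X j. g (length p + length q + 2))) =
        (if i = j then (\<Sum>p\<in>Y i. \<Sum>q\<in>Y i. g (tdist p q))
         else (\<Sum>p\<in>Y i. \<Sum>q\<in>Y j. g (length p + length q + 2)))"
      using hi cross_eq[OF hi hj] unfolding hinv_def by auto
  qed
  show ?thesis unfolding hinv_def using fX fY d dd by auto
qed

lemma count_profile:
  assumes "finite S"
  shows "count (profile S) d = card {(u, v). u \<in> S \<and> v \<in> S \<and> u < v \<and> tdist u v = d}"
proof -
  let ?P = "{(u, v). u \<in> S \<and> v \<in> S \<and> u < v}"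
  have fP: "finite ?P" by (rule finite_subset[of _ "S \<times> S"]) (use assms in auto)
  have "count (profile S) d = (\<Sum>x | x \<in># mset_set ?P \<and> d = (case x of (u, v) \<Rightarrow> tdist u v). count (mset_set ?P) x)"
    unfolding profile_def by (rule count_image_mset')
  also have "\<dots> = (\<Sum>x \<in> {(u, v). u \<in> S \<and> v \<in> S \<and> u < v \<and> tdist u v = d}. 1)"
    apply (rule sum.cong)
    using fP by auto
  finally show ?thesis by simp
qed

lemma card_all_pairs:
  assumes "finite S"
  shows "card {(u, v). u \<in> S \<and> v \<in> S \<and> tdist u v = d} = 2 * count (profile S) d + (if d = 0 then card S else 0)"
proof -
  let ?L = "{(u, v). u \<in> S \<and> v \<in> S \<and> u < v \<and> tdist u v = d}"
  let ?R = "{(u, v). u \<in> S \<and> v \<in> S \<and> v < u \<and> tdist u v = d}"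
  let ?D = "{(u, v). u \<in> S \<and> v \<in> S \<and> u = v \<and> tdist u v = d}"
  have fin: "finite ?L" "finite ?R" "finite ?D"
    by (rule finite_subset[of _ "S \<times> S"], use assms in auto)+
  have eq: "{(u, v). u \<in> S \<and> v \<in> S \<and> tdist u v = d} = ?L \<union> ?R \<union> ?D"
    by auto
  have "card (?L \<union> ?R \<union> ?D) = card ?L + card ?R + card ?D"
    using fin by (subst card_Un_disjoint, auto)+
  moreover have "?R = prod.swap ` ?L" by (auto simp: tdist_sym)
  then have "card ?R = card ?L" by (simp add: card_image)
  moreover have "?D = (if d = 0 then (\<lambda>u. (u, u)) ` S else {})" by (auto simp: tdist_same)
  then have "card ?D = (if d = 0 then card S else 0)" by (simp add: card_image inj_on_def)
  ultimately show ?thesis using eq count_profile[OF assms, of d] by simp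
qed

lemma sum_ind_card:
  assumes "finite S"
  shows "(\<Sum>u\<in>S. \<Sum>v\<in>S. (\<lambda>x. if x = d then 1 else 0) (tdist u v)) = card {(u, v). u \<in> S \<and> v \<in> S \<and> tdist u v = d}"
proof -
  have "(\<Sum>u\<in>S. \<Sum>v\<in>S. (\<lambda>x. if x = d then 1 else 0) (tdist u v)) = (\<Sum>(u,v)\<in>S \<times> S. if tdist u v = d then 1 else 0)"
    by (simp add: sum.cartesian_product)
  also have "\<dots> = card {x \<in> S \<times> S. (case x of (u, v) \<Rightarrow> tdist u v) = d}"
    using assms by (simp add: sum.If_cases case_prod_beta' split_def Int_def)
  also have "{x \<in> S \<times> S. (case x of (u, v) \<Rightarrow> tdist u v) = d} = {(u, v). u \<in> S \<and> v \<in> S \<and> tdist u v = d}" by auto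
  finally show ?thesis .
qed

lemma hinv_profile:
  assumes "hinv A B"
  shows "profile A = profile B" "card A = card B"
proof -
  have fA: "finite A" and fB: "finite B" using assms unfolding hinv_def by auto
  have dd: "\<And>g::nat\<Rightarrow>nat. (\<Sum>u\<in>A. \<Sum>v\<in>A. g (tdist u v)) = (\<Sum>u\<in>B. \<Sum>v\<in>B. g (tdist u v))"
    using assms unfolding hinv_def by blast
  have "(\<Sum>u\<in>A. (\<lambda>_. 1::nat) (length u)) = (\<Sum>u\<in>B. (\<lambda>_. 1::nat) (length u))"
    using assms unfolding hinv_def by (elim conjE allE) assumption
  then show cc: "card A = card B" by simp
  show "profile A = profile B"
  proof (rule multiset_eqI)
    fix d
    have "card {(u, v). u \<in> A \<and> v \<in> A \<and> tdist u v = d} = card {(u, v). u \<in> B \<and> v \<in> B \<and> tdist u v = d}"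
      using dd[of "\<lambda>x. if x = d then 1 else 0"] sum_ind_card[OF fA, of d] sum_ind_card[OF fB, of d] by simp
    then show "count (profile A) d = count (profile B) d"
      using card_all_pairs[OF fA, of d] card_all_pairs[OF fB, of d] cc by (cases "d = 0") simp_all
  qed
qed

lemma is_pos_take: "is_pos t w \<Longrightarrow> is_pos t (take a w)"
proof (induction arbitrary: a rule: is_pos.induct)
  case (root t) then show ?case by (simp add: is_pos.root)
next
  case (child i ts p)
  then show ?case by (cases a) (auto intro: is_pos.intros)
qed

lemma deep_path: "\<exists>w. is_pos t w \<and> Suc (length w) = height t"
proof (induction t)
  case (Nd ts)
  show ?case
  proof (cases "ts = []")
    case True then show ?thesis by (auto intro: is_pos.root)
  next
    case False
    have "Max (insert 0 (set (map height ts))) \<in> set (map height ts)"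
    proof -
      have "Max (set (map height ts)) \<in> set (map height ts)" using False by (intro Max_in) auto
      moreover have "Max (insert 0 (set (map height ts))) = Max (set (map height ts))"
        using False by (simp add: Max_insert)
      ultimately show ?thesis by simp
    qed
    then obtain i where i: "i < length ts" "height (ts ! i) = Max (insert 0 (set (map height ts)))"
      by (auto simp: in_set_conv_nth)
    obtain w where w: "is_pos (ts ! i) w" "Suc (length w) = height (ts ! i)"
      using Nd.IH[of "ts ! i"] i(1) by auto
    show ?thesis
      by (rule exI[of _ "i # w"]) (use i w in \<open>auto intro: is_pos.child\<close>)
  qed
qed

definition pth :: "nat list \<Rightarrow> nat \<Rightarrow> nat list set" where
  "pth w h = (\<lambda>a. take a w) ` {..<h}"

lemma pth_sum:
  assumes "h \<le> Suc (length w)"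
  shows "(\<Sum>x\<in>pth w h. \<phi> x) = (\<Sum>a<h. \<phi> (take a w))"
proof -
  have "inj_on (\<lambda>a. take a w) {..<h}"
  proof (rule inj_onI)
    fix a b assume "a \<in> {..<h}" "b \<in> {..<h}" "take a w = take b w"
    then have "length (take a w) = length (take b w)" by simp
    then show "a = b" using \<open>a \<in> {..<h}\<close> \<open>b \<in> {..<h}\<close> assms by auto
  qed
  then show ?thesis unfolding pth_def by (simp add: sum.reindex)
qed

lemma pth_hinv:
  assumes "h \<le> Suc (length w)" "h \<le> Suc (length w')"
  shows "hinv (pth w h) (pth w' h)"
proof -
  have d1: "(\<Sum>u\<in>pth w h. \<Sum>v\<in>pth w h. g (tdist u v)) = (\<Sum>a<h. \<Sum>b<h. g (if a \<le> b then b - a else a - b))"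
    if "h \<le> Suc (length w)" for w and g :: "nat \<Rightarrow> nat"
    using that by (simp add: pth_sum tdist_take)
  have d2: "(\<Sum>u\<in>pth w h. g (length u)) = (\<Sum>a<h. g a)"
    if "h \<le> Suc (length w)" for w and g :: "nat \<Rightarrow> nat"
    using that by (simp add: pth_sum min_def, intro sum.cong, auto, metis le_antisym less_Suc_eq_le order.strict_trans2)
  show ?thesis unfolding hinv_def using d1 d2 assms by (simp add: pth_def)
qed

lemma pth_card: "h \<le> Suc (length w) \<Longrightarrow> card (pth w h) = h"
  using pth_sum[of h w "\<lambda>_. 1::nat"] by simp

lemma pth_verts: "is_pos t w \<Longrightarrow> pth w h \<subseteq> verts t"
  unfolding pth_def verts_def by (auto intro: is_pos_take)

lemma verts_Cons: "i < length ts \<Longrightarrow> X \<subseteq> verts (ts ! i) \<Longrightarrow> Cons i ` X \<subseteq> verts (Nd ts)"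
  unfolding verts_def by (auto intro: is_pos.child)

definition good :: "rtree \<Rightarrow> nat list set \<Rightarrow> nat list set \<Rightarrow> bool" where
  "good t A B \<longleftrightarrow> A \<subseteq> verts t \<and> B \<subseteq> verts t \<and> A \<inter> B = {} \<and> hinv A B"

lemma child_case:
  assumes IH: "\<forall>t\<in>set ts. \<exists>A B. good t A B \<and> card A \<ge> f t"
  shows "\<exists>A B. good (Nd ts) A B \<and> card A \<ge> sum_list (map f ts)"
proof -
  let ?n = "length ts"
  have "\<forall>i. \<exists>AB. i < ?n \<longrightarrow> good (ts ! i) (fst AB) (snd AB) \<and> card (fst AB) \<ge> f (ts ! i)"
    using IH by (metis fst_conv nth_mem snd_conv)
  then obtain AB where AB: "\<And>i. i < ?n \<Longrightarrow> good (ts ! i) (fst (AB i)) (snd (AB i)) \<and> card (fst (AB i)) \<ge> f (ts ! i)"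
    by metis
  define X where "X i = fst (AB i)" for i
  define Y where "Y i = snd (AB i)" for i
  have g: "\<And>i. i < ?n \<Longrightarrow> good (ts ! i) (X i) (Y i)" and c: "\<And>i. i < ?n \<Longrightarrow> card (X i) \<ge> f (ts ! i)"
    using AB unfolding X_def Y_def by auto
  let ?A = "\<Union>i<?n. Cons ((\<lambda>i. i) i) ` X i"
  let ?B = "\<Union>i<?n. Cons ((\<lambda>i. i) i) ` Y i"
  have hi: "\<forall>i<?n. hinv (X i) (Y i)" using g unfolding good_def by auto
  then have fX: "\<forall>i<?n. finite (X i)" unfolding hinv_def by auto
  have h: "hinv ?A ?B" by (rule hinv_combine) (use hi in auto)
  have sA: "?A \<subseteq> verts (Nd ts)" using g verts_Cons unfolding good_def by blast
  have sB: "?B \<subseteq> verts (Nd ts)" using g verts_Cons unfolding good_def by blast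
  have dj: "?A \<inter> ?B = {}" using g unfolding good_def by auto
  have "card ?A = (\<Sum>i<?n. card (X i))" by (rule card_UN_Cons) (use fX in auto)
  also have "\<dots> \<ge> (\<Sum>i<?n. f (ts ! i))" by (rule sum_mono) (use c in auto)
  finally have "card ?A \<ge> sum_list (map f ts)"
    by (simp add: sum_list_sum_nth atLeast0LessThan)
  then show ?thesis using h sA sB dj unfolding good_def by blast
qed

lemma path_case:
  assumes ne: "ts \<noteq> []"
  shows "\<exists>A B. good (Nd ts) A B \<and>
     card A \<ge> (\<Sum>i<length (padded_heights ts) div 2. padded_heights ts ! (2 * i + 1))"
proof -
  let ?n = "length ts"
  define hs where "hs = rev (sort (map height ts))"
  define m where "m = ?n div 2"
  have lhs: "length hs = ?n" unfolding hs_def by simp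
  have "mset hs = mset (map height ts)" unfolding hs_def by simp
  then obtain \<sigma> where \<sigma>: "\<sigma> permutes {..<?n}" "permute_list \<sigma> (map height ts) = hs"
    by (metis length_map mset_eq_permutation)
  have hsn: "j < ?n \<Longrightarrow> hs ! j = height (ts ! \<sigma> j)" for j
    using \<sigma> permute_list_nth[of \<sigma> "map height ts" j] permutes_in_image[OF \<sigma>(1), of j] by auto
  have sin: "j < ?n \<Longrightarrow> \<sigma> j < ?n" for j using permutes_in_image[OF \<sigma>(1), of j] by auto
  have injs: "inj \<sigma>" by (rule permutes_inj[OF \<sigma>(1)])
  have mono: "j \<le> j' \<Longrightarrow> j' < ?n \<Longrightarrow> hs ! j' \<le> hs ! j" for j j'
  proof -
    assume a: "j \<le> j'" "j' < ?n"
    have "sort (map height ts) ! (?n - Suc j') \<le> sort (map height ts) ! (?n - Suc j)"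
      by (rule sorted_nth_mono) (use a in auto)
    then show ?thesis unfolding hs_def using a by (simp add: rev_nth)
  qed
  have psum: "(\<Sum>i<length (padded_heights ts) div 2. padded_heights ts ! (2 * i + 1)) = (\<Sum>k<m. hs ! (2 * k + 1))"
  proof (cases "even ?n")
    case True
    then have "padded_heights ts = hs" unfolding padded_heights_def hs_def by (simp add: Let_def)
    then show ?thesis using lhs m_def by simp
  next
    case False
    then have pe: "padded_heights ts = hs @ [0]" unfolding padded_heights_def hs_def by (simp add: Let_def)
    have l: "length (padded_heights ts) div 2 = Suc m" using False pe lhs m_def by simp
    have "(\<Sum>i<Suc m. padded_heights ts ! (2 * i + 1)) = (\<Sum>k<m. padded_heights ts ! (2 * k + 1)) + padded_heights ts ! (2 * m + 1)"
      by simp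
    also have "padded_heights ts ! (2 * m + 1) = 0" using pe lhs m_def False
      by (simp add: nth_append)
    also have "(\<Sum>k<m. padded_heights ts ! (2 * k + 1)) = (\<Sum>k<m. hs ! (2 * k + 1))"
      by (rule sum.cong[OF refl]) (use pe lhs m_def in \<open>auto simp: nth_append\<close>)
    finally show ?thesis using l by simp
  qed
  have "\<forall>c. \<exists>w. is_pos (ts ! c) w \<and> Suc (length w) = height (ts ! c)" using deep_path by blast
  then obtain w where w: "\<And>c. is_pos (ts ! c) (w c)" "\<And>c. Suc (length (w c)) = height (ts ! c)" by metis
  define \<alpha> where "\<alpha> k = \<sigma> (2 * k)" for k
  define \<beta> where "\<beta> k = \<sigma> (2 * k + 1)" for k
  define hk where "hk k = hs ! (2 * k + 1)" for k
  define X where "X k = pth (w (\<alpha> k)) (hk k)" for k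
  define Y where "Y k = pth (w (\<beta> k)) (hk k)" for k
  have km: "k < m \<Longrightarrow> 2 * k + 1 < ?n" for k unfolding m_def by linarith
  have hka: "k < m \<Longrightarrow> hk k \<le> Suc (length (w (\<alpha> k)))" for k
    using km[of k] w(2) mono[of "2*k" "2*k+1"] hsn[of "2*k"] unfolding hk_def \<alpha>_def by auto
  have hkb: "k < m \<Longrightarrow> hk k \<le> Suc (length (w (\<beta> k)))" for k
    using km[of k] w(2) hsn[of "2*k+1"] unfolding hk_def \<beta>_def by auto
  let ?A = "\<Union>k<m. Cons (\<alpha> k) ` X k"
  let ?B = "\<Union>k<m. Cons (\<beta> k) ` Y k"
  have ia: "inj_on \<alpha> {..<m}"
  proof (rule inj_onI)
    fix x y assume "\<alpha> x = \<alpha> y"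
    then have "2 * x = 2 * y" using injD[OF injs] unfolding \<alpha>_def by blast
    then show "x = y" by simp
  qed
  have ib: "inj_on \<beta> {..<m}"
  proof (rule inj_onI)
    fix x y assume "\<beta> x = \<beta> y"
    then have "2 * x + 1 = 2 * y + 1" using injD[OF injs] unfolding \<beta>_def by blast
    then show "x = y" by simp
  qed
  have hi: "\<forall>k<m. hinv (X k) (Y k)" unfolding X_def Y_def using hka hkb pth_hinv by auto
  have h: "hinv ?A ?B" by (rule hinv_combine[OF ia ib hi])
  have sA: "?A \<subseteq> verts (Nd ts)"
  proof -
    have "Cons (\<alpha> k) ` X k \<subseteq> verts (Nd ts)" if "k < m" for k
      unfolding X_def by (rule verts_Cons) (use sin[of "2*k"] km[of k] that w pth_verts in \<open>auto simp: \<alpha>_def\<close>)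
    then show ?thesis by blast
  qed
  have sB: "?B \<subseteq> verts (Nd ts)"
  proof -
    have "Cons (\<beta> k) ` Y k \<subseteq> verts (Nd ts)" if "k < m" for k
      unfolding Y_def by (rule verts_Cons) (use sin km that w pth_verts in \<open>auto simp: \<beta>_def\<close>)
    then show ?thesis by blast
  qed
  have dj: "?A \<inter> ?B = {}"
  proof -
    have "\<alpha> k \<noteq> \<beta> k'" for k k'
    proof
      assume "\<alpha> k = \<beta> k'"
      then have "2 * k = 2 * k' + 1" using injD[OF injs] unfolding \<alpha>_def \<beta>_def by blast
      then show False by presburger
    qed
    then show ?thesis by auto
  qed
  have fX: "\<forall>k<m. finite (X k)" unfolding X_def pth_def by auto
  have "card ?A = (\<Sum>k<m. card (X k))" by (rule card_UN_Cons[OF ia fX])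
  also have "\<dots> = (\<Sum>k<m. hs ! (2 * k + 1))"
    by (rule sum.cong[OF refl]) (use hka pth_card in \<open>auto simp: X_def hk_def\<close>)
  finally have "card ?A = (\<Sum>i<length (padded_heights ts) div 2. padded_heights ts ! (2 * i + 1))"
    using psum by simp
  then have "good (Nd ts) ?A ?B \<and> card ?A \<ge> (\<Sum>i<length (padded_heights ts) div 2. padded_heights ts ! (2 * i + 1))"
    using h sA sB dj unfolding good_def by simp
  then show ?thesis by blast
qed

theorem main: "\<exists>A B. good t A B \<and> card A \<ge> f t"
proof (induction t)
  case (Nd ts)
  show ?case
  proof (cases "ts = []")
    case True
    then show ?thesis by (auto simp: good_def hinv_def)
  next
    case False
    obtain A B where 1: "good (Nd ts) A B" "card A \<ge> sum_list (map f ts)"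
      using child_case[of ts] Nd.IH by blast
    obtain A' B' where 2: "good (Nd ts) A' B'"
      "card A' \<ge> (\<Sum>i<length (padded_heights ts) div 2. padded_heights ts ! (2 * i + 1))"
      using path_case[OF False] by blast
    show ?thesis using False 1 2 by (cases "sum_list (map f ts) \<le> (\<Sum>i<length (padded_heights ts) div 2. padded_heights ts ! (2 * i + 1))") (auto simp: max_def)
  qed
qed

theorem lemma1:
  fixes t :: rtree
  shows "\<exists>A B. A \<subseteq> verts t \<and> B \<subseteq> verts t \<and> A \<inter> B = {} \<and> homometric A B
           \<and> card A = card B \<and> card A \<ge> f t"
proof -
  obtain A B where g: "good t A B" and c: "card A \<ge> f t" using main by blast
  then have h: "hinv A B" and s: "A \<subseteq> verts t" "B \<subseteq> verts t" "A \<inter> B = {}"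
    unfolding good_def by auto
  have "homometric A B" unfolding homometric_def using s(3) hinv_profile(1)[OF h] by simp
  then show ?thesis using s c hinv_profile(2)[OF h] by blast
qed

end
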